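(* Let $G$ be a fullerene graph. Then $G$ has a perfect star packing if and only if $G$ has an independent vertex set $S^*$ such that each connected component of $G-S^*$ is a cycle which is an induced cycle of $G$.
   Context: A fullerene graph is a finite simple connected (equivalently, $3$-connected) plane cubic graph all of whose faces are pentagons or hexagons. A perfect star packing of a graph $G$ is a spanning subgraph of $G$ every connected component of which is isomorphic to the star $K_{1,3}$. A cycle $v_1\cdots v_k v_1$ in $G$ is induced if it has no chord, i.e. no edge $v_iv_j$ of $G$ with $v_i,v_j$ non-consecutive on the cycle. *)

theory Defs
  imports Main
begin

definition simple_graph :: "'a set \<Rightarrow> ('a \<Rightarrow> 'a \<Rightarrow> bool) \<Rightarrow> bool" where
  "simple_graph V E \<longleftrightarrow> finite V \<and> (\<forall>x y. E x y \<longrightarrow> x \<in> V \<and> y \<in> V)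
     \<and> (\<forall>x y. E x y \<longrightarrow> E y x) \<and> (\<forall>x. \<not> E x x)"

definition neighbours :: "'a set \<Rightarrow> ('a \<Rightarrow> 'a \<Rightarrow> bool) \<Rightarrow> 'a \<Rightarrow> 'a set" where
  "neighbours V E v = {w \<in> V. E v w}"

definition cubic :: "'a set \<Rightarrow> ('a \<Rightarrow> 'a \<Rightarrow> bool) \<Rightarrow> bool" where
  "cubic V E \<longleftrightarrow> (\<forall>v\<in>V. card (neighbours V E v) = 3)"

definition restr :: "'a set \<Rightarrow> ('a \<Rightarrow> 'a \<Rightarrow> bool) \<Rightarrow> 'a \<Rightarrow> 'a \<Rightarrow> bool" where
  "restr W E x y \<longleftrightarrow> x \<in> W \<and> y \<in> W \<and> E x y"

definition connected_graph :: "'a set \<Rightarrow> ('a \<Rightarrow> 'a \<Rightarrow> bool) \<Rightarrow> bool" where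
  "connected_graph V E \<longleftrightarrow> V \<noteq> {} \<and> (\<forall>x\<in>V. \<forall>y\<in>V. (restr V E)\<^sup>*\<^sup>* x y)"

definition component :: "'a set \<Rightarrow> ('a \<Rightarrow> 'a \<Rightarrow> bool) \<Rightarrow> 'a \<Rightarrow> 'a set" where
  "component V E v = {w \<in> V. (restr V E)\<^sup>*\<^sup>* v w}"

definition components :: "'a set \<Rightarrow> ('a \<Rightarrow> 'a \<Rightarrow> bool) \<Rightarrow> 'a set set" where
  "components V E = component V E ` V"

definition edge_set :: "'a set \<Rightarrow> ('a \<Rightarrow> 'a \<Rightarrow> bool) \<Rightarrow> 'a set set" where
  "edge_set V E = {{x, y} | x y. x \<in> V \<and> y \<in> V \<and> E x y}"

definition darts :: "'a set \<Rightarrow> ('a \<Rightarrow> 'a \<Rightarrow> bool) \<Rightarrow> ('a \<times> 'a) set" where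
  "darts V E = {(u, v). u \<in> V \<and> v \<in> V \<and> E u v}"

definition rotation_system :: "'a set \<Rightarrow> ('a \<Rightarrow> 'a \<Rightarrow> bool) \<Rightarrow> ('a \<times> 'a \<Rightarrow> 'a \<times> 'a) \<Rightarrow> bool" where
  "rotation_system V E rho \<longleftrightarrow> bij_betw rho (darts V E) (darts V E)
     \<and> (\<forall>d\<in>darts V E. fst (rho d) = fst d)
     \<and> (\<forall>d\<in>darts V E. \<forall>d'\<in>darts V E. fst d = fst d' \<longrightarrow> (\<exists>n. (rho ^^ n) d = d'))"

definition face_perm :: "('a \<times> 'a \<Rightarrow> 'a \<times> 'a) \<Rightarrow> 'a \<times> 'a \<Rightarrow> 'a \<times> 'a" where
  "face_perm rho d = rho (snd d, fst d)"

definition orbit_of :: "('b \<Rightarrow> 'b) \<Rightarrow> 'b \<Rightarrow> 'b set" where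
  "orbit_of f x = {(f ^^ n) x | n. True}"

text \<open>Faces of the embedding = orbits of the face permutation (given as dart sets);
the length of a face is the number of darts on its boundary walk.\<close>
definition faces :: "'a set \<Rightarrow> ('a \<Rightarrow> 'a \<Rightarrow> bool) \<Rightarrow> ('a \<times> 'a \<Rightarrow> 'a \<times> 'a) \<Rightarrow> ('a \<times> 'a) set set" where
  "faces V E rho = orbit_of (face_perm rho) ` darts V E"

text \<open>A rotation system describes an embedding in the sphere (a plane embedding) of a
connected graph iff Euler's formula V - E + F = 2 holds.\<close>
definition plane_rotation_system :: "'a set \<Rightarrow> ('a \<Rightarrow> 'a \<Rightarrow> bool) \<Rightarrow> ('a \<times> 'a \<Rightarrow> 'a \<times> 'a) \<Rightarrow> bool" where
  "plane_rotation_system V E rho \<longleftrightarrow> rotation_system V E rho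
     \<and> int (card V) - int (card (edge_set V E)) + int (card (faces V E rho)) = 2"

definition fullerene :: "'a set \<Rightarrow> ('a \<Rightarrow> 'a \<Rightarrow> bool) \<Rightarrow> bool" where
  "fullerene V E \<longleftrightarrow> simple_graph V E \<and> connected_graph V E \<and> cubic V E
     \<and> (\<exists>rho. plane_rotation_system V E rho
          \<and> (\<forall>f\<in>faces V E rho. card f = 5 \<or> card f = 6))"

definition is_K13 :: "'a set \<Rightarrow> ('a \<Rightarrow> 'a \<Rightarrow> bool) \<Rightarrow> bool" where
  "is_K13 C H \<longleftrightarrow> card C = 4 \<and>
     (\<exists>c\<in>C. \<forall>x\<in>C. \<forall>y\<in>C. H x y \<longleftrightarrow> (x = c \<and> y \<noteq> c) \<or> (y = c \<and> x \<noteq> c))"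

definition perfect_star_packing :: "'a set \<Rightarrow> ('a \<Rightarrow> 'a \<Rightarrow> bool) \<Rightarrow> bool" where
  "perfect_star_packing V E \<longleftrightarrow>
     (\<exists>H. (\<forall>x y. H x y \<longrightarrow> E x y) \<and> (\<forall>x y. H x y \<longrightarrow> H y x)
        \<and> (\<forall>C\<in>components V H. is_K13 C (restr C H)))"

definition cyc_adj :: "'a list \<Rightarrow> 'a \<Rightarrow> 'a \<Rightarrow> bool" where
  "cyc_adj vs x y \<longleftrightarrow> (\<exists>i<length vs. (x = vs ! i \<and> y = vs ! ((i + 1) mod length vs))
                                    \<or> (y = vs ! i \<and> x = vs ! ((i + 1) mod length vs)))"

definition is_cycle :: "('a \<Rightarrow> 'a \<Rightarrow> bool) \<Rightarrow> 'a list \<Rightarrow> bool" where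
  "is_cycle E vs \<longleftrightarrow> distinct vs \<and> length vs \<ge> 3
     \<and> (\<forall>i<length vs. E (vs ! i) (vs ! ((i + 1) mod length vs)))"

definition induced_cycle :: "('a \<Rightarrow> 'a \<Rightarrow> bool) \<Rightarrow> 'a list \<Rightarrow> bool" where
  "induced_cycle E vs \<longleftrightarrow> is_cycle E vs
     \<and> (\<forall>x\<in>set vs. \<forall>y\<in>set vs. E x y \<longrightarrow> cyc_adj vs x y)"

definition graph_is_cycle :: "'a set \<Rightarrow> ('a \<Rightarrow> 'a \<Rightarrow> bool) \<Rightarrow> 'a list \<Rightarrow> bool" where
  "graph_is_cycle C F vs \<longleftrightarrow> set vs = C \<and> is_cycle F vs
     \<and> (\<forall>x\<in>C. \<forall>y\<in>C. F x y \<longleftrightarrow> cyc_adj vs x y)"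

definition independent_set :: "'a set \<Rightarrow> ('a \<Rightarrow> 'a \<Rightarrow> bool) \<Rightarrow> 'a set \<Rightarrow> bool" where
  "independent_set V E S \<longleftrightarrow> S \<subseteq> V \<and> (\<forall>x\<in>S. \<forall>y\<in>S. \<not> E x y)"

end

theory Submission
  imports Defs
begin

lemma comp_self: "v \<in> W \<Longrightarrow> v \<in> component W R v"
  by (simp add: component_def)

lemma comp_sub: "component W R v \<subseteq> W"
  by (auto simp: component_def)

lemma comp_closed: "x \<in> component W R v \<Longrightarrow> y \<in> W \<Longrightarrow> R x y \<Longrightarrow> y \<in> component W R v"
  unfolding component_def
  by (auto intro: rtranclp.rtrancl_into_rtrancl simp: restr_def)

lemma comp_induct:
  assumes "v \<in> A" and "\<And>x y. x \<in> A \<Longrightarrow> y \<in> W \<Longrightarrow> x \<in> W \<Longrightarrow> R x y \<Longrightarrow> y \<in> A"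
  shows "component W R v \<subseteq> A"
proof
  fix w assume "w \<in> component W R v"
  then have "(restr W R)\<^sup>*\<^sup>* v w" by (simp add: component_def)
  then show "w \<in> A"
    by (induct rule: rtranclp_induct) (use assms in \<open>auto simp: restr_def\<close>)
qed

lemma restr_symp: "(\<forall>x y. R x y \<longrightarrow> R y x) \<Longrightarrow> symp (restr W R)"
  by (auto simp: symp_def restr_def)

lemma comp_eq:
  assumes sym: "\<forall>x y. R x y \<longrightarrow> R y x" and w: "w \<in> component W R v"
  shows "component W R w = component W R v"
proof -
  have s: "symp ((restr W R)\<^sup>*\<^sup>*)" using symp_rtranclp[OF restr_symp[OF sym]] .
  have vw: "(restr W R)\<^sup>*\<^sup>* v w" using w by (simp add: component_def)
  then have wv: "(restr W R)\<^sup>*\<^sup>* w v" using s by (meson sympD)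
  show ?thesis unfolding component_def
    using vw wv by (auto intro: rtranclp_trans)
qed

lemma comp_mem_sym:
  assumes sym: "\<forall>x y. R x y \<longrightarrow> R y x" and w: "w \<in> component W R v" and "v \<in> W"
  shows "v \<in> component W R w"
  using comp_eq[OF sym w] comp_self[OF \<open>v \<in> W\<close>] by simp

lemma idxB: fixes n i j :: nat assumes n: "n \<ge> 3" and i: "i < n" and j: "j < n"
  shows "(i = (j + 1) mod n) \<longleftrightarrow> j = (i + n - 1) mod n"
proof (cases "j + 1 < n")
  case True
  then show ?thesis using i j
    by (cases "i = 0") (auto simp: mod_if)
next
  case False
  then have "j = n - 1" using j by auto
  then show ?thesis using i n
    by (cases "i = 0") (auto simp: mod_if)
qed

lemma cyc_adj_char:
  assumes d: "distinct vs" and n: "length vs \<ge> 3" and i: "i < length vs"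
  shows "cyc_adj vs (vs ! i) y \<longleftrightarrow>
     y = vs ! ((i + 1) mod length vs) \<or> y = vs ! ((i + length vs - 1) mod length vs)"
proof -
  define m where "m = length vs"
  have n': "m \<ge> 3" and i': "i < m" using n i m_def by auto
  have pos: "0 < m" using i' by linarith
  have A: "(vs ! i = vs ! j) \<longleftrightarrow> i = j" if "j < m" for j
    using nth_eq_iff_index_eq[OF d] i that m_def by blast
  have C: "(vs ! i = vs ! ((j + 1) mod m)) \<longleftrightarrow> j = (i + m - 1) mod m" if "j < m" for j
  proof -
    have "(j + 1) mod m < m" using pos by simp
    then have "(vs ! i = vs ! ((j + 1) mod m)) \<longleftrightarrow> i = (j + 1) mod m"
      using nth_eq_iff_index_eq[OF d] i m_def by blast
    then show ?thesis using idxB[OF n' i' that] by simp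
  qed
  have lt: "(i + m - 1) mod m < m" using pos by simp
  show ?thesis
    unfolding cyc_adj_def m_def[symmetric]
  proof
    assume "\<exists>j<m. vs ! i = vs ! j \<and> y = vs ! ((j + 1) mod m) \<or> y = vs ! j \<and> vs ! i = vs ! ((j + 1) mod m)"
    then obtain j where j: "j < m" and
      h: "vs ! i = vs ! j \<and> y = vs ! ((j + 1) mod m) \<or> y = vs ! j \<and> vs ! i = vs ! ((j + 1) mod m)"
      by blast
    show "y = vs ! ((i + 1) mod m) \<or> y = vs ! ((i + m - 1) mod m)"
      using h
    proof
      assume h1: "vs ! i = vs ! j \<and> y = vs ! ((j + 1) mod m)"
      then have "i = j" using A[OF j] by blast
      then show ?thesis using h1 by blast
    next
      assume h2: "y = vs ! j \<and> vs ! i = vs ! ((j + 1) mod m)"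
      then have "j = (i + m - 1) mod m" using C[OF j] by blast
      then show ?thesis using h2 by blast
    qed
  next
    assume "y = vs ! ((i + 1) mod m) \<or> y = vs ! ((i + m - 1) mod m)"
    then show "\<exists>j<m. vs ! i = vs ! j \<and> y = vs ! ((j + 1) mod m) \<or> y = vs ! j \<and> vs ! i = vs ! ((j + 1) mod m)"
    proof
      assume "y = vs ! ((i + 1) mod m)" then show ?thesis using i' by blast
    next
      assume y: "y = vs ! ((i + m - 1) mod m)"
      have "vs ! i = vs ! (((i + m - 1) mod m + 1) mod m)" using C[OF lt] by blast
      then show ?thesis using y lt by blast
    qed
  qed
qed

lemma idx_distinct:
  assumes n: "n \<ge> (3::nat)" and i: "i < n"
  shows "(i + 1) mod n \<noteq> (i + n - 1) mod n" "(i + 1) mod n \<noteq> i" "(i + n - 1) mod n \<noteq> i"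
  using n i by (auto simp: mod_if split: if_splits)

lemma cyc_two:
  assumes d: "distinct vs" and n: "length vs \<ge> 3" and i: "i < length vs"
  shows "card {y \<in> set vs. cyc_adj vs (vs ! i) y} = 2"
proof -
  let ?n = "length vs"
  have pos: "0 < ?n" using i by linarith
  have e: "{y \<in> set vs. cyc_adj vs (vs ! i) y} = {vs ! ((i + 1) mod ?n), vs ! ((i + ?n - 1) mod ?n)}"
  proof -
    have "(i + 1) mod ?n < ?n" "(i + ?n - 1) mod ?n < ?n" using pos by simp_all
    then show ?thesis using cyc_adj_char[OF d n i] nth_mem by blast
  qed
  have pos: "0 < ?n" using i by linarith
  have a: "(i + 1) mod ?n < ?n" "(i + ?n - 1) mod ?n < ?n" using pos by simp_all
  have "vs ! ((i + 1) mod ?n) \<noteq> vs ! ((i + ?n - 1) mod ?n)"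
    using nth_eq_iff_index_eq[OF d a] idx_distinct(1)[OF n i] by simp
  then show ?thesis using e by simp
qed

lemma cyc_adj_R:
  assumes c: "is_cycle R vs" and sym: "\<forall>x y. R x y \<longrightarrow> R y x" and a: "cyc_adj vs x y"
  shows "R x y"
  using a c sym unfolding cyc_adj_def is_cycle_def by blast

lemma cyc_adj_mem: "cyc_adj vs x y \<Longrightarrow> y \<in> set vs"
  unfolding cyc_adj_def
  by (metis length_pos_if_in_set mod_less_divisor nth_mem)

lemma two_reg_cycle:
  assumes fin: "finite W" and sym: "\<forall>x y. R x y \<longrightarrow> R y x" and irr: "\<forall>x. \<not> R x x"
    and deg: "\<forall>x\<in>W. card {y\<in>W. R x y} = 2" and v: "v \<in> W"
  shows "\<exists>vs. graph_is_cycle (component W R v) (restr (component W R v) R) vs \<and> induced_cycle R vs"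
proof -
  define C where "C = component W R v"
  have CW: "C \<subseteq> W" unfolding C_def by (rule comp_sub)
  have finC: "finite C" using CW fin finite_subset by blast
  define P where "P p \<longleftrightarrow> p \<noteq> [] \<and> distinct p \<and> set p \<subseteq> C \<and> (\<forall>i. Suc i < length p \<longrightarrow> R (p!i) (p!Suc i))" for p
  have P0: "P [v]" unfolding P_def C_def using comp_self[OF v] by simp
  have bnd: "\<forall>q. P q \<longrightarrow> length q < card C + 1"
  proof (intro allI impI)
    fix q assume "P q"
    then have "card (set q) \<le> card C" "card (set q) = length q"
      unfolding P_def using card_mono[OF finC] distinct_card by auto
    then show "length q < card C + 1" by simp
  qed
  obtain p where Pp: "P p" and mx: "\<forall>q. P q \<longrightarrow> length q \<le> length p"
    using ex_has_greatest_nat[of P "[v]" length "card C + 1", OF P0 bnd] by blast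
  define n where "n = length p"
  have pne: "p \<noteq> []" and dp: "distinct p" and spC: "set p \<subseteq> C"
    and adj: "\<And>i. Suc i < n \<Longrightarrow> R (p!i) (p!Suc i)"
    using Pp unfolding P_def n_def by auto
  have n0: "n > 0" using pne n_def by simp
  define u where "u = p ! (n - 1)"
  have uin: "u \<in> set p" using n0 n_def u_def by simp
  have uW: "u \<in> W" using uin spC CW by auto
  have ext: "y \<in> set p" if yW: "y \<in> W" and Ruy: "R u y" for y
  proof (rule ccontr)
    assume ny: "y \<notin> set p"
    have "y \<in> C" using comp_closed[of u W R v y] uin spC yW Ruy unfolding C_def by auto
    moreover have "\<forall>i. Suc i < length (p @ [y]) \<longrightarrow> R ((p @ [y])!i) ((p @ [y])!Suc i)"
    proof (intro allI impI)
      fix i assume "Suc i < length (p @ [y])"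
      then have "Suc i < n \<or> i = n - 1" using n_def n0 by auto
      then show "R ((p @ [y])!i) ((p @ [y])!Suc i)"
      proof
        assume "Suc i < n" then show ?thesis using adj[of i] n_def by (simp add: nth_append)
      next
        assume "i = n - 1" then show ?thesis using Ruy u_def n_def n0 by (simp add: nth_append)
      qed
    qed
    ultimately have "P (p @ [y])" using dp ny spC unfolding P_def by auto
    then show False using mx n_def by fastforce
  qed
  define N where "N = {y\<in>W. R u y}"
  have cN: "card N = 2" using deg uW N_def by auto
  then obtain a b where ab: "a \<noteq> b" "N = {a, b}" by (meson card_2_iff)
  have abp: "a \<in> set p" "b \<in> set p" "a \<noteq> u" "b \<noteq> u" using ab ext irr N_def by auto
  have "card {a, b, u} = 3" using ab abp by auto
  moreover have "{a, b, u} \<subseteq> set p" using abp uin by auto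
  ultimately have "3 \<le> card (set p)" by (metis card_mono List.finite_set)
  then have n3: "n \<ge> 3" using distinct_card[OF dp] n_def by simp
  define pr where "pr = p ! (n - 2)"
  have e2: "Suc (n - 2) < n" "Suc (n - 2) = n - 1" using n3 by auto
  have "R pr u" using adj[OF e2(1)] unfolding pr_def u_def e2(2) .
  then have Rup: "R u pr" using sym by blast
  have "pr \<in> set p" using n3 pr_def n_def by simp
  then have prW: "pr \<in> W" using spC CW by auto
  have prN: "pr \<in> N" using Rup prW N_def by auto
  obtain w where wN: "w \<in> N" and wpr: "w \<noteq> pr" using ab prN by auto
  have wp: "w \<in> set p" using wN N_def ext by auto
  then obtain j where j: "j < n" "p ! j = w" using n_def by (meson in_set_conv_nth)
  have wu: "w \<noteq> u" using wN N_def irr by auto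
  have jn1: "j \<noteq> n - 1" using j wu u_def by auto
  have jn2: "j \<noteq> n - 2" using j wpr pr_def by auto
  have j0: "j = 0"
  proof (rule ccontr)
    assume "j \<noteq> 0"
    have jl: "j + 1 < n - 1" using j jn1 jn2 by auto
    let ?A = "{p ! (j - 1), p ! (j + 1), u}"
    have i1: "j - 1 < n" "j + 1 < n" "n - 1 < n" using jl by auto
    have "p ! (j - 1) \<noteq> p ! (j + 1)" using dp i1 n_def nth_eq_iff_index_eq \<open>j \<noteq> 0\<close> by fastforce
    moreover have "p ! (j - 1) \<noteq> u" using dp i1 n_def nth_eq_iff_index_eq u_def jl by fastforce
    moreover have "p ! (j + 1) \<noteq> u" using dp i1 n_def nth_eq_iff_index_eq u_def jl by fastforce
    ultimately have c3: "card ?A = 3" by auto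
    have "R (p ! (j - 1)) (p ! j)" using adj[of "j - 1"] \<open>j \<noteq> 0\<close> j by simp
    then have r1: "R w (p ! (j - 1))" using sym j by auto
    have r2: "R w (p ! (j + 1))" using adj[of j] jl j by simp
    have r3: "R w u" using wN N_def sym by auto
    have "p ! (j - 1) \<in> set p" "p ! (j + 1) \<in> set p" using i1 n_def by simp_all
    then have "?A \<subseteq> {y\<in>W. R w y}" using r1 r2 r3 spC CW uW by auto
    moreover have "w \<in> W" using wN N_def by auto
    ultimately have "3 \<le> card {y\<in>W. R w y}" using c3 fin
      by (metis (no_types, lifting) card_mono finite_subset mem_Collect_eq subsetI)
    then show False using deg \<open>w \<in> W\<close> by auto
  qed
  have Ru0: "R u (p ! 0)" using j j0 wN N_def by auto
  have cyc: "is_cycle R p"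
    unfolding is_cycle_def
  proof (intro conjI allI impI)
    show "distinct p" by (rule dp)
    show "3 \<le> length p" using n3 n_def by simp
    fix i assume i: "i < length p"
    show "R (p ! i) (p ! ((i + 1) mod length p))"
    proof (cases "Suc i < n")
      case True then show ?thesis using adj[of i] n_def by simp
    next
      case False then have "i = n - 1" using i n_def by simp
      then show ?thesis using Ru0 u_def n_def n0 by simp
    qed
  qed
  have K: "R x y \<longleftrightarrow> cyc_adj p x y" if xp: "x \<in> set p" and yW: "y \<in> W" for x y
  proof
    assume "cyc_adj p x y" then show "R x y" using cyc_adj_R[OF cyc sym] by blast
  next
    assume Rxy: "R x y"
    obtain i where i: "i < n" "x = p ! i" using xp n_def by (metis in_set_conv_nth)
    let ?T = "{p ! ((i + 1) mod n), p ! ((i + n - 1) mod n)}"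
    have ctw: "\<And>z. z \<in> ?T \<longleftrightarrow> cyc_adj p x z"
      using cyc_adj_char[OF dp _ ] n3 n_def i by auto
    have TB: "?T \<subseteq> {y\<in>W. R x y}"
    proof
      fix z assume z: "z \<in> ?T"
      have "(i + 1) mod n < n" "(i + n - 1) mod n < n" using n0 by simp_all
      then have "z \<in> set p" using z n_def by auto
      then have "z \<in> W" using spC CW by auto
      moreover have "R x z" using ctw z cyc_adj_R[OF cyc sym] by blast
      ultimately show "z \<in> {y\<in>W. R x y}" by simp
    qed
    have "p ! ((i + 1) mod n) \<noteq> p ! ((i + n - 1) mod n)"
      using idx_distinct(1)[OF n3 i(1)] dp n3 nth_eq_iff_index_eq n_def
      by (metis mod_less_divisor n0)
    then have "card ?T = 2" by simp
    moreover have "x \<in> W" using xp spC CW by auto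
    ultimately have "?T = {y\<in>W. R x y}" using TB deg fin
      by (metis (no_types, lifting) card_subset_eq finite_subset mem_Collect_eq subsetI)
    then show "cyc_adj p x y" using ctw Rxy yW by blast
  qed
  have setp: "set p = C"
  proof
    show "set p \<subseteq> C" by (rule spC)
    have p0: "p ! 0 \<in> set p" using pne by simp
    then have "p ! 0 \<in> C" using spC by auto
    then have Ceq: "C = component W R (p ! 0)" unfolding C_def using comp_eq[OF sym] by metis
    have cl: "y \<in> set p" if "x \<in> set p" "y \<in> W" "x \<in> W" "R x y" for x y
    proof -
      have "cyc_adj p x y" using K that by blast
      then show ?thesis by (rule cyc_adj_mem)
    qed
    show "C \<subseteq> set p" unfolding Ceq
      by (rule comp_induct[OF p0 cl])
  qed
  have "graph_is_cycle C (restr C R) p"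
    unfolding graph_is_cycle_def
  proof (intro conjI ballI)
    show "set p = C" by (rule setp)
    show "is_cycle (restr C R) p" using cyc setp unfolding is_cycle_def restr_def
      by (metis mod_less_divisor nth_mem length_pos_if_in_set)
    fix x y assume "x \<in> C" "y \<in> C"
    then show "restr C R x y \<longleftrightarrow> cyc_adj p x y" using K setp CW unfolding restr_def by auto
  qed
  moreover have "induced_cycle R p" unfolding induced_cycle_def
    using cyc K setp CW by auto
  ultimately show ?thesis unfolding C_def by blast
qed

lemma sg_facts:
  assumes "simple_graph V E"
  shows "finite V" "\<And>x y. E x y \<Longrightarrow> x \<in> V" "\<And>x y. E x y \<Longrightarrow> y \<in> V"
    "\<And>x y. E x y \<Longrightarrow> E y x" "\<And>x. \<not> E x x"
  using assms unfolding simple_graph_def by blast+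

lemma fwd:
  assumes sg: "simple_graph V E" and cub: "cubic V E" and psp: "perfect_star_packing V E"
  shows "\<exists>S. independent_set V E S \<and> (\<forall>x\<in>V - S. card {y\<in>V - S. E x y} = 2)"
proof -
  note G = sg_facts[OF sg]
  obtain H where HE: "\<And>x y. H x y \<Longrightarrow> E x y" and Hs: "\<And>x y. H x y \<Longrightarrow> H y x"
    and K: "\<forall>C\<in>components V H. is_K13 C (restr C H)"
    using psp unfolding perfect_star_packing_def by blast
  have Hsym: "\<forall>x y. H x y \<longrightarrow> H y x" using Hs by blast
  have nfin: "finite (neighbours V R x)" for R x
    using G(1) unfolding neighbours_def by simp
  have KC: "\<exists>c\<in>component V H x. card (component V H x) = 4 \<and>
     (\<forall>y\<in>component V H x. neighbours V H y = (if y = c then component V H x - {c} else {c}))"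
    if xV: "x \<in> V" for x
  proof -
    define C where "C = component V H x"
    have "C \<in> components V H" using xV unfolding C_def components_def by simp
    then have "is_K13 C (restr C H)" using K by blast
    then obtain c where c4: "card C = 4" and cC: "c \<in> C"
      and cp: "\<forall>a\<in>C. \<forall>b\<in>C. restr C H a b \<longleftrightarrow> (a = c \<and> b \<noteq> c) \<or> (b = c \<and> a \<noteq> c)"
      unfolding is_K13_def by blast
    have CV: "C \<subseteq> V" unfolding C_def by (rule comp_sub)
    have nb: "neighbours V H y = {z\<in>C. restr C H y z}" if yC: "y \<in> C" for y
    proof
      show "neighbours V H y \<subseteq> {z\<in>C. restr C H y z}"
      proof
        fix z assume "z \<in> neighbours V H y"
        then have zV: "z \<in> V" and Hyz: "H y z" unfolding neighbours_def by auto
        have "z \<in> C" using comp_closed[of y V H x z] yC zV Hyz unfolding C_def by blast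
        then show "z \<in> {z\<in>C. restr C H y z}" using yC Hyz by (simp add: restr_def)
      qed
      show "{z\<in>C. restr C H y z} \<subseteq> neighbours V H y"
        using CV by (auto simp: restr_def neighbours_def)
    qed
    have "\<forall>y\<in>C. neighbours V H y = (if y = c then C - {c} else {c})"
    proof
      fix y assume yC: "y \<in> C"
      show "neighbours V H y = (if y = c then C - {c} else {c})"
        unfolding nb[OF yC] using cp yC cC by auto
    qed
    then show ?thesis using c4 cC unfolding C_def by blast
  qed
  define S where "S = {v\<in>V. card (neighbours V H v) = 3}"
  have inS: "y \<in> S \<longleftrightarrow> y = c" if "x \<in> V" "c \<in> component V H x" "card (component V H x) = 4"
    "\<forall>y\<in>component V H x. neighbours V H y = (if y = c then component V H x - {c} else {c})"
    "y \<in> component V H x" for x c y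
  proof -
    have yV: "y \<in> V" using comp_sub[of V H x] that(5) by blast
    have c3: "card (component V H x - {c}) = 3" using that(2,3) by (simp add: card_Diff_singleton)
    have ny: "neighbours V H y = (if y = c then component V H x - {c} else {c})" using that(4,5) by blast
    have "card (neighbours V H y) = 3 \<longleftrightarrow> y = c"
    proof (cases "y = c")
      case True then show ?thesis using ny c3 by simp
    next
      case False then show ?thesis using ny by simp
    qed
    then show ?thesis using yV unfolding S_def by blast
  qed
  have a: "y \<notin> S" if xS: "x \<in> S" and Hxy: "H x y" for x y
  proof -
    have xV: "x \<in> V" using xS S_def by auto
    obtain c where c: "c \<in> component V H x" "card (component V H x) = 4"
      "\<forall>y\<in>component V H x. neighbours V H y = (if y = c then component V H x - {c} else {c})"
      using KC[OF xV] by blast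
    have xc: "x = c" using inS[OF xV c] xS comp_self[OF xV] by blast
    have "y \<in> neighbours V H x" using Hxy HE G(3) unfolding neighbours_def by blast
    then have "y \<in> component V H x" "y \<noteq> c" using c(3) comp_self[OF xV] xc by auto
    then show ?thesis using inS[OF xV c] by blast
  qed
  have b: "\<exists>c\<in>S. neighbours V H x = {c}" if xS: "x \<in> V - S" for x
  proof -
    have xV: "x \<in> V" using xS by auto
    obtain c where c: "c \<in> component V H x" "card (component V H x) = 4"
      "\<forall>y\<in>component V H x. neighbours V H y = (if y = c then component V H x - {c} else {c})"
      using KC[OF xV] by blast
    have xc: "x \<noteq> c" using inS[OF xV c] xS comp_self[OF xV] by blast
    have "c \<in> S" using inS[OF xV c] c(1) by blast
    moreover have "neighbours V H x = {c}" using c(3) comp_self[OF xV] xc by auto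
    ultimately show ?thesis by blast
  qed
  have HEeq: "neighbours V H x = neighbours V E x" if xS: "x \<in> S" for x
  proof -
    have "neighbours V H x \<subseteq> neighbours V E x" using HE unfolding neighbours_def by auto
    moreover have "card (neighbours V H x) = card (neighbours V E x)"
      using xS cub unfolding S_def cubic_def by auto
    ultimately show ?thesis using nfin card_subset_eq by metis
  qed
  have ind: "independent_set V E S"
    unfolding independent_set_def
  proof (intro conjI ballI notI)
    show "S \<subseteq> V" unfolding S_def by auto
    fix x y assume xS: "x \<in> S" and yS: "y \<in> S" and Exy: "E x y"
    have "y \<in> neighbours V E x" using Exy G(3) unfolding neighbours_def by auto
    then have "H x y" using HEeq[OF xS] unfolding neighbours_def by auto
    then show False using a[OF xS] yS by blast
  qed
  have deg: "card {y\<in>V - S. E x y} = 2" if xS: "x \<in> V - S" for x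
  proof -
    obtain c where cS: "c \<in> S" and nc: "neighbours V H x = {c}" using b[OF xS] by blast
    have Hxc: "H x c" using nc unfolding neighbours_def by auto
    have cE: "c \<in> neighbours V E x" using HE[OF Hxc] G(3) unfolding neighbours_def by auto
    have eq: "{y\<in>V - S. E x y} = neighbours V E x - {c}"
    proof
      show "{y\<in>V - S. E x y} \<subseteq> neighbours V E x - {c}" using cS unfolding neighbours_def by auto
      show "neighbours V E x - {c} \<subseteq> {y\<in>V - S. E x y}"
      proof
        fix y assume y: "y \<in> neighbours V E x - {c}"
        then have yV: "y \<in> V" and Exy: "E x y" and yc: "y \<noteq> c" unfolding neighbours_def by auto
        have "y \<notin> S"
        proof
          assume yS: "y \<in> S"
          have "x \<in> neighbours V E y" using G(4)[OF Exy] xS unfolding neighbours_def by auto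
          then have "H y x" using HEeq[OF yS] unfolding neighbours_def by auto
          then have "y \<in> neighbours V H x" using Hs[of y x] yV unfolding neighbours_def by auto
          then show False using nc yc by auto
        qed
        then show "y \<in> {y\<in>V - S. E x y}" using yV Exy by auto
      qed
    qed
    have "card (neighbours V E x) = 3" using cub xS unfolding cubic_def by auto
    then show ?thesis unfolding eq using cE nfin by (simp add: card_Diff_singleton)
  qed
  show ?thesis using ind deg by blast
qed

lemma bwd:
  assumes sg: "simple_graph V E" and cub: "cubic V E" and ind: "independent_set V E S"
    and deg: "\<forall>x\<in>V - S. card {y\<in>V - S. E x y} = 2"
  shows "perfect_star_packing V E"
proof -
  note G = sg_facts[OF sg]
  have SV: "S \<subseteq> V" and indS: "\<And>x y. x \<in> S \<Longrightarrow> y \<in> S \<Longrightarrow> \<not> E x y"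
    using ind unfolding independent_set_def by auto
  define H where "H x y \<longleftrightarrow> E x y \<and> (x \<in> S \<or> y \<in> S)" for x y
  have HE: "\<forall>x y. H x y \<longrightarrow> E x y" unfolding H_def by blast
  have Hsym: "\<forall>x y. H x y \<longrightarrow> H y x"
  proof (intro allI impI)
    fix x y assume "H x y" then show "H y x" using G(4)[of x y] unfolding H_def by blast
  qed
  have uniq: "\<exists>c. {y\<in>S. E x y} = {c}" if xS: "x \<in> V - S" for x
  proof -
    have fS: "finite S" using finite_subset[OF SV G(1)] .
    have n3: "card (neighbours V E x) = 3" using cub xS unfolding cubic_def by auto
    have un: "neighbours V E x = {y\<in>V - S. E x y} \<union> {y\<in>S. E x y}"
      using SV unfolding neighbours_def by auto
    have "card (neighbours V E x) = card {y\<in>V - S. E x y} + card {y\<in>S. E x y}"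
      unfolding un by (rule card_Un_disjoint) (use G(1) fS in auto)
    then have "card {y\<in>S. E x y} = 1" using n3 deg xS by simp
    then show ?thesis by (simp add: card_1_singleton_iff)
  qed
  define star where "star c = insert c (neighbours V E c)" for c
  have starV: "star c \<subseteq> V" if "c \<in> S" for c using that SV unfolding star_def neighbours_def by blast
  have compc: "component V H c = star c" if cS: "c \<in> S" for c
  proof
    have cV: "c \<in> V" using cS SV by auto
    show "star c \<subseteq> component V H c"
    proof
      fix y assume "y \<in> star c"
      then have "y = c \<or> (y \<in> V \<and> E c y)" unfolding star_def neighbours_def by auto
      then show "y \<in> component V H c"
      proof
        assume "y = c" then show ?thesis using comp_self[OF cV] by simp
      next
        assume y: "y \<in> V \<and> E c y"
        then have "H c y" using cS unfolding H_def by blast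
        then show ?thesis using comp_closed[OF comp_self[OF cV]] y by blast
      qed
    qed
    have cl: "y \<in> star c" if "x \<in> star c" "y \<in> V" "x \<in> V" "H x y" for x y
    proof (cases "x = c")
      case True then show ?thesis using that unfolding star_def neighbours_def H_def by auto
    next
      case False
      then have x: "x \<in> V" "E c x" using that(1) unfolding star_def neighbours_def by auto
      have xS: "x \<notin> S" using indS[OF cS] x(2) by blast
      then have yS: "y \<in> S" "E x y" using that(4) unfolding H_def by auto
      obtain c' where c': "{y\<in>S. E x y} = {c'}" using uniq xS x(1) by blast
      have "c \<in> {y\<in>S. E x y}" using cS G(4)[OF x(2)] by blast
      moreover have "y \<in> {y\<in>S. E x y}" using yS by blast
      ultimately have "y = c" using c' by (metis singletonD)
      then show ?thesis unfolding star_def by simp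
    qed
    have "c \<in> star c" unfolding star_def by simp
    then show "component V H c \<subseteq> star c" by (rule comp_induct) (rule cl)
  qed
  have compv: "\<exists>c\<in>S. component V H v = star c" if vV: "v \<in> V" for v
  proof (cases "v \<in> S")
    case True then show ?thesis using compc by blast
  next
    case False
    then obtain c where c: "{y\<in>S. E v y} = {c}" using uniq vV by blast
    then have cS: "c \<in> S" and Evc: "E v c" by auto
    have "v \<in> star c" using G(4)[OF Evc] vV unfolding star_def neighbours_def by auto
    then have "v \<in> component V H c" using compc[OF cS] by simp
    then have "component V H v = component V H c" by (rule comp_eq[OF Hsym])
    then show ?thesis using compc[OF cS] cS by blast
  qed
  have K: "is_K13 (star c) (restr (star c) H)" if cS: "c \<in> S" for c
    unfolding is_K13_def
  proof
    have cn: "c \<notin> neighbours V E c" using G(5) unfolding neighbours_def by auto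
    have "card (neighbours V E c) = 3" using cub cS SV unfolding cubic_def by auto
    then show "card (star c) = 4" unfolding star_def using cn G(1)
      by (simp add: neighbours_def)
    show "\<exists>c'\<in>star c. \<forall>x\<in>star c. \<forall>y\<in>star c. restr (star c) H x y \<longleftrightarrow> (x = c' \<and> y \<noteq> c') \<or> (y = c' \<and> x \<noteq> c')"
    proof (intro bexI ballI)
      show "c \<in> star c" unfolding star_def by simp
      fix x y assume xs: "x \<in> star c" and ys: "y \<in> star c"
      have nS: "z \<notin> S" if "z \<in> star c" "z \<noteq> c" for z
        using that indS[OF cS] unfolding star_def neighbours_def by auto
      have Ec: "E c z" if "z \<in> star c" "z \<noteq> c" for z
        using that unfolding star_def neighbours_def by auto
      show "restr (star c) H x y \<longleftrightarrow> (x = c \<and> y \<noteq> c) \<or> (y = c \<and> x \<noteq> c)"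
      proof (cases "x = c")
        case True
        then show ?thesis using xs ys Ec[OF ys] cS G(5)[of c] unfolding restr_def H_def by auto
      next
        case False
        note xn = nS[OF xs False]
        show ?thesis
        proof (cases "y = c")
          case True
          then show ?thesis using xs ys False cS G(4)[OF Ec[OF xs False]] unfolding restr_def H_def by auto
        next
          case yc: False
          then show ?thesis using xn nS[OF ys yc] False unfolding restr_def H_def by auto
        qed
      qed
    qed
  qed
  show ?thesis unfolding perfect_star_packing_def
  proof (intro exI conjI allI impI ballI)
    show "\<And>x y. H x y \<Longrightarrow> E x y" using HE by blast
    show "\<And>x y. H x y \<Longrightarrow> H y x" using Hsym by blast
    fix C assume "C \<in> components V H"
    then obtain v where vV: "v \<in> V" and C: "C = component V H v" unfolding components_def by blast
    obtain c where cS: "c \<in> S" and "component V H v = star c" using compv[OF vV] by blast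
    then show "is_K13 C (restr C H)" using K[OF cS] C by simp
  qed
qed

lemma deg_from_cycles:
  assumes sg: "simple_graph V E"
    and cyc: "\<forall>C\<in>components (V - S) E. \<exists>vs. graph_is_cycle C (restr C E) vs \<and> induced_cycle E vs"
  shows "\<forall>x\<in>V - S. card {y\<in>V - S. E x y} = 2"
proof
  fix x assume xW: "x \<in> V - S"
  define C where "C = component (V - S) E x"
  have "C \<in> components (V - S) E" using xW unfolding C_def components_def by simp
  then obtain vs where g: "graph_is_cycle C (restr C E) vs" using cyc by blast
  have sv: "set vs = C" and ic: "is_cycle (restr C E) vs"
    and ca: "\<forall>a\<in>C. \<forall>b\<in>C. restr C E a b \<longleftrightarrow> cyc_adj vs a b"
    using g unfolding graph_is_cycle_def by auto
  have dv: "distinct vs" and l3: "length vs \<ge> 3" using ic unfolding is_cycle_def by auto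
  have xC: "x \<in> C" unfolding C_def using comp_self[OF xW] .
  then obtain i where i: "i < length vs" "vs ! i = x" using sv by (metis in_set_conv_nth)
  have "{y\<in>V - S. E x y} = {y \<in> set vs. cyc_adj vs (vs ! i) y}"
  proof
    show "{y\<in>V - S. E x y} \<subseteq> {y \<in> set vs. cyc_adj vs (vs ! i) y}"
    proof
      fix y assume y: "y \<in> {y\<in>V - S. E x y}"
      then have yC: "y \<in> C" using comp_closed[of x "V - S" E x y] xC unfolding C_def by blast
      then have "cyc_adj vs x y" using ca xC y unfolding restr_def by blast
      then show "y \<in> {y \<in> set vs. cyc_adj vs (vs ! i) y}" using yC sv i by simp
    qed
    show "{y \<in> set vs. cyc_adj vs (vs ! i) y} \<subseteq> {y\<in>V - S. E x y}"
    proof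
      fix y assume "y \<in> {y \<in> set vs. cyc_adj vs (vs ! i) y}"
      then have yC: "y \<in> C" and "cyc_adj vs x y" using sv i by auto
      then have "restr C E x y" using ca xC by blast
      moreover have "C \<subseteq> V - S" unfolding C_def by (rule comp_sub)
      ultimately show "y \<in> {y\<in>V - S. E x y}" using yC unfolding restr_def by blast
    qed
  qed
  then show "card {y\<in>V - S. E x y} = 2" using cyc_two[OF dv l3 i(1)] by simp
qed

lemma cycles_from_deg:
  assumes sg: "simple_graph V E" and deg: "\<forall>x\<in>V - S. card {y\<in>V - S. E x y} = 2"
  shows "\<forall>C\<in>components (V - S) E. \<exists>vs. graph_is_cycle C (restr C E) vs \<and> induced_cycle E vs"
proof
  note G = sg_facts[OF sg]
  fix C assume "C \<in> components (V - S) E"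
  then obtain v where v: "v \<in> V - S" and C: "C = component (V - S) E v"
    unfolding components_def by blast
  have fin: "finite (V - S)" using G(1) by simp
  have sym: "\<forall>x y. E x y \<longrightarrow> E y x" using G(4) by blast
  have irr: "\<forall>x. \<not> E x x" using G(5) by blast
  show "\<exists>vs. graph_is_cycle C (restr C E) vs \<and> induced_cycle E vs"
    unfolding C using two_reg_cycle[OF fin sym irr deg v] .
qed

theorem mainTheorem3:
  fixes V :: "'a set" and E :: "'a \<Rightarrow> 'a \<Rightarrow> bool"
  assumes "fullerene V E"
  shows "perfect_star_packing V E \<longleftrightarrow>
    (\<exists>S. independent_set V E S \<and>
       (\<forall>C\<in>components (V - S) E.
          \<exists>vs. graph_is_cycle C (restr C E) vs \<and> induced_cycle E vs))"
proof -
  have sg: "simple_graph V E" and cub: "cubic V E" using assms unfolding fullerene_def by auto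
  show ?thesis
  proof
    assume "perfect_star_packing V E"
    then obtain S where "independent_set V E S" "\<forall>x\<in>V - S. card {y\<in>V - S. E x y} = 2"
      using fwd[OF sg cub] by blast
    then show "\<exists>S. independent_set V E S \<and>
       (\<forall>C\<in>components (V - S) E. \<exists>vs. graph_is_cycle C (restr C E) vs \<and> induced_cycle E vs)"
      using cycles_from_deg[OF sg] by blast
  next
    assume "\<exists>S. independent_set V E S \<and>
       (\<forall>C\<in>components (V - S) E. \<exists>vs. graph_is_cycle C (restr C E) vs \<and> induced_cycle E vs)"
    then obtain S where "independent_set V E S"
      "\<forall>C\<in>components (V - S) E. \<exists>vs. graph_is_cycle C (restr C E) vs \<and> induced_cycle E vs"
      by blast
    then show "perfect_star_packing V E" using bwd[OF sg cub] deg_from_cycles[OF sg] by blast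
  qed
qed

end
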